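(* Let $A\in\mathbb{R}^{m\times n}$ with $i$-th row $a_i^T$, $b\in\mathbb{R}^m$, and consider the affine-ReLU function $F(x)=\mathrm{relu}(Ax+b)$ (ReLU applied entrywise, $\mathrm{relu}(t)=\max(0,t)$). Let $x_0\in\mathbb{R}^n$, $\epsilon\ge0$, $D=\mathrm{diag}(d_1,\dots,d_n)$ with $d_j\in\{0,1\}$, and $\mathcal{X}=\{x_0+D\Delta x:\ \|\Delta x\|\le\epsilon\}$. Let $y_0=Ax_0+b$, $\mathcal{Y}=\{Ax+b:x\in\mathcal{X}\}$, $\mathcal{Y}_i=\{y_i: y\in\mathcal{Y}\}$, and $\bar y_i=\max\mathcal{Y}_i$. Define $$r_i=\begin{cases}0,& \mathcal{Y}_i=\{y_{0,i}\},\\[2pt] \dfrac{\mathrm{relu}(\bar y_i)-\mathrm{relu}(y_{0,i})}{\bar y_i-y_{0,i}},&\text{otherwise},\end{cases}\qquad R=\mathrm{diag}(r_1,\dots,r_m).$$ Then the local Lipschitz constant of $F$ satisfies $$L(x_0,\mathcal{X})\le\|RAD\|,$$ where $\|RAD\|$ is the spectral norm.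
   Context: $\|\cdot\|$ is the Euclidean norm on vectors and the induced operator (spectral) norm on matrices. For $F:\mathbb{R}^n\to\mathbb{R}^m$, $x_0\in\mathbb{R}^n$ and $\mathcal{X}\subseteq\mathbb{R}^n$, the local Lipschitz constant is $L(x_0,\mathcal{X})=\sup_{x\in\mathcal{X},\,x\neq x_0}\frac{\|F(x)-F(x_0)\|}{\|x-x_0\|}$, with the convention that the supremum over an empty set is $0$. $y_i, y_{0,i}$ denote $i$-th entries. *)

theory Defs
  imports "HOL-Analysis.Analysis"
begin

definition relu :: "real \<Rightarrow> real" where
  "relu t = max 0 t"

text \<open>Diagonal matrix with given diagonal entries.\<close>
definition diag_mat :: "real ^ 'n \<Rightarrow> real ^ 'n ^ 'n" where
  "diag_mat d = (\<chi> i j. if i = j then d $ i else 0)"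

text \<open>Local Lipschitz constant, valued in the extended reals so that an
  unbounded supremum is +infinity; supremum over the empty set is 0.\<close>
definition local_lip ::
  "('a::real_normed_vector \<Rightarrow> 'b::real_normed_vector) \<Rightarrow> 'a \<Rightarrow> 'a set \<Rightarrow> ereal" where
  "local_lip F x0 X =
     (if X - {x0} = {} then 0
      else (SUP x\<in>X - {x0}. ereal (norm (F x - F x0) / norm (x - x0))))"

text \<open>Spectral (operator 2-)norm of a matrix.\<close>
definition spec_norm :: "real ^ 'n ^ 'm \<Rightarrow> real" where
  "spec_norm M = onorm (\<lambda>v. M *v v)"

end

theory Submission imports Defs begin
lemma relu_sec:
  fixes y0 yb t :: real
  assumes "yb > y0" "\<bar>t - y0\<bar> \<le> yb - y0"
  shows "\<bar>relu t - relu y0\<bar> \<le> (relu yb - relu y0) / (yb - y0) * \<bar>t - y0\<bar>"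
proof (cases "y0 \<ge> 0")
  case True
  then show ?thesis using assms by (simp add: relu_def max_def)
next
  case y0n: False
  show ?thesis
  proof (cases "yb \<le> 0")
    case ybn: True
    have "t \<le> yb" using assms by arith
    then have "t \<le> 0" using ybn by simp
    then show ?thesis using assms y0n ybn by (auto simp: relu_def max_def)
  next
    case yb: False
    show ?thesis
    proof (cases "t \<le> 0")
      case True
      have "relu yb - relu y0 \<ge> 0" using y0n by (simp add: relu_def)
      then have "(relu yb - relu y0) / (yb - y0) * \<bar>t - y0\<bar> \<ge> 0" using assms by simp
      moreover have "relu t = 0" "relu y0 = 0" using True y0n by (auto simp: relu_def)
      ultimately show ?thesis by simp
    next
      case t: False
      have "t * (-y0) \<le> yb * (-y0)" using assms y0n by (intro mult_right_mono) auto
      then have "t * (yb - y0) \<le> yb * (t - y0)" by (simp add: algebra_simps)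
      then show ?thesis using assms y0n yb t by (simp add: relu_def max_def field_simps)
    qed
  qed
qed
lemma diag_mult: "(diag_mat r *v w) $ i = r $ i * w $ i"
  unfolding diag_mat_def matrix_vector_mult_def by (simp add: if_distrib if_distribR cong: if_cong)

theorem theorem2:
  fixes A :: "real ^ 'n ^ 'm" and b :: "real ^ 'm" and x0 :: "real ^ 'n"
    and \<epsilon> :: real and d :: "real ^ 'n"
    and F :: "real ^ 'n \<Rightarrow> real ^ 'm"
    and X :: "(real ^ 'n) set" and Y :: "(real ^ 'm) set"
    and y0 :: "real ^ 'm" and ybar r :: "'m \<Rightarrow> real"
  assumes F_def: "F = (\<lambda>x. \<chi> i. relu ((A *v x + b) $ i))"
    and eps: "\<epsilon> \<ge> 0"
    and d01: "\<forall>j. d $ j \<in> {0, 1}"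
    and X_def: "X = {x0 + diag_mat d *v dx | dx. norm dx \<le> \<epsilon>}"
    and y0_def: "y0 = A *v x0 + b"
    and Y_def: "Y = {A *v x + b | x. x \<in> X}"
    and ybar_def: "\<forall>i. ybar i = Sup {y $ i | y. y \<in> Y}"
    and r_def: "\<forall>i. r i = (if {y $ i | y. y \<in> Y} = {y0 $ i} then 0
                  else (relu (ybar i) - relu (y0 $ i)) / (ybar i - y0 $ i))"
  shows "local_lip F x0 X \<le> ereal (spec_norm (diag_mat (\<chi> i. r i) ** A ** diag_mat d))"
proof -
  define D where "D = diag_mat d"
  define M where "M = diag_mat (\<chi> i. r i) ** A ** diag_mat d"
  have DD: "D *v (D *v v) = D *v v" for v
  proof -
    have "d $ i * (d $ i * v $ i) = d $ i * v $ i" for i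
      using d01 by (cases "d $ i = 0") auto
    then show ?thesis unfolding D_def by (simp add: vec_eq_iff diag_mult)
  qed
  have bl: "bounded_linear (\<lambda>dx. A *v (D *v dx))"
    using bounded_linear_compose[OF matrix_vector_mul_bounded_linear matrix_vector_mul_bounded_linear] .
  obtain K where K: "K > 0" "\<And>dx. norm (A *v (D *v dx)) \<le> norm dx * K"
    using bounded_linear.pos_bounded[OF bl] by blast
  define S where "S i = {y $ i | y. y \<in> Y}" for i
  have Axb: "A *v (x0 + D *v dx) + b = y0 + A *v (D *v dx)" for dx
    by (simp add: y0_def matrix_vector_right_distrib algebra_simps)
  have memS: "y0 $ i + (A *v (D *v dx)) $ i \<in> S i" if "norm dx \<le> \<epsilon>" for i dx
  proof -
    have "x0 + D *v dx \<in> X" using that unfolding X_def D_def by blast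
    then have "A *v (x0 + D *v dx) + b \<in> Y" unfolding Y_def by blast
    then show ?thesis unfolding S_def Axb by force
  qed
  have Sform: "\<exists>dx. norm dx \<le> \<epsilon> \<and> z = y0 $ i + (A *v (D *v dx)) $ i" if "z \<in> S i" for z i
  proof -
    from that obtain x where "x \<in> X" "z = (A *v x + b) $ i" unfolding S_def Y_def by blast
    then obtain dx where "norm dx \<le> \<epsilon>" "x = x0 + D *v dx" unfolding X_def D_def by blast
    then show ?thesis using \<open>z = _\<close> Axb by auto
  qed
  have bdd: "bdd_above (S i)" for i
  proof (rule bdd_aboveI)
    fix z assume "z \<in> S i"
    then obtain dx where dx: "norm dx \<le> \<epsilon>" "z = y0 $ i + (A *v (D *v dx)) $ i" using Sform by blast
    have "(A *v (D *v dx)) $ i \<le> norm (A *v (D *v dx))"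
      using component_le_norm_cart[of "A *v (D *v dx)" i] by arith
    also have "\<dots> \<le> norm dx * K" by (rule K(2))
    also have "\<dots> \<le> \<epsilon> * K" using dx K by (intro mult_right_mono) auto
    finally show "z \<le> y0 $ i + \<epsilon> * K" using dx by simp
  qed
  have tb: "\<bar>(A *v (D *v dx)) $ i\<bar> \<le> ybar i - y0 $ i" if "norm dx \<le> \<epsilon>" for dx i
  proof -
    have "ybar i = Sup (S i)" using ybar_def S_def by simp
    have "y0 $ i + (A *v (D *v dx)) $ i \<le> ybar i"
      using cSup_upper[OF memS[OF that] bdd] \<open>ybar i = Sup (S i)\<close> by simp
    moreover have "norm (-dx) \<le> \<epsilon>" using that by simp
    then have "y0 $ i + (A *v (D *v (-dx))) $ i \<le> ybar i"
      using cSup_upper[OF memS bdd] \<open>ybar i = Sup (S i)\<close> by simp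
    then have "y0 $ i - (A *v (D *v dx)) $ i \<le> ybar i"
      using linear_neg[OF bounded_linear.linear[OF bl], of dx] by simp
    ultimately show ?thesis by arith
  qed
  have key: "\<bar>relu (y0 $ i + (A *v (D *v dx)) $ i) - relu (y0 $ i)\<bar> \<le> r i * \<bar>(A *v (D *v dx)) $ i\<bar>
      \<and> r i \<ge> 0" if "norm dx \<le> \<epsilon>" for dx i
  proof (cases "S i = {y0 $ i}")
    case True
    then have "r i = 0" using r_def S_def by simp
    moreover have "(A *v (D *v dx)) $ i = 0" using memS[OF that, of i] True by simp
    ultimately show ?thesis by simp
  next
    case False
    then have r: "r i = (relu (ybar i) - relu (y0 $ i)) / (ybar i - y0 $ i)" using r_def S_def by simp
    have "0 \<in> {0::real}" by simp
    have "norm (0::real^'n) \<le> \<epsilon>" using eps by simp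
    then have "y0 $ i \<in> S i" using memS[of 0 i] by simp
    with False obtain z where z: "z \<in> S i" "z \<noteq> y0 $ i" by blast
    then obtain dz where dz: "norm dz \<le> \<epsilon>" "z = y0 $ i + (A *v (D *v dz)) $ i" using Sform by blast
    have "ybar i > y0 $ i" using tb[OF dz(1), of i] dz z by arith
    moreover have "relu (ybar i) \<ge> relu (y0 $ i)" using calculation by (simp add: relu_def)
    ultimately show ?thesis
      using relu_sec[of "y0 $ i" "ybar i" "y0 $ i + (A *v (D *v dx)) $ i"] tb[OF that, of i] r
      by simp
  qed
  have blM: "bounded_linear (\<lambda>v. M *v v)" by simp
  show ?thesis
    unfolding local_lip_def spec_norm_def M_def[symmetric]
  proof (cases "X - {x0} = {}")
    case True
    then show "(if X - {x0} = {} then 0 else SUP x\<in>X - {x0}. ereal (norm (F x - F x0) / norm (x - x0)))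
        \<le> ereal (onorm ((*v) M))" using onorm_pos_le[OF blM] by simp
  next
    case False
    have "ereal (norm (F x - F x0) / norm (x - x0)) \<le> ereal (onorm ((*v) M))" if x: "x \<in> X - {x0}" for x
    proof -
      obtain dx where dx: "norm dx \<le> \<epsilon>" "x = x0 + D *v dx" using x unfolding X_def D_def by blast
      define v where "v = x - x0"
      have v: "v = D *v dx" using dx v_def by simp
      have vpos: "norm v > 0" using x v_def by simp
      have Mv: "M *v v = diag_mat (\<chi> i. r i) *v (A *v (D *v dx))"
        unfolding M_def by (simp add: matrix_vector_mul_assoc[symmetric] v DD D_def[symmetric])
      have "norm (F x - F x0) \<le> norm (M *v v)"
      proof (rule norm_le_componentwise_cart)
        fix i
        have "(F x - F x0) $ i = relu (y0 $ i + (A *v (D *v dx)) $ i) - relu (y0 $ i)"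
          using Axb[of dx] unfolding F_def dx(2) by (simp add: y0_def algebra_simps)
        moreover have "(M *v v) $ i = r i * (A *v (D *v dx)) $ i" by (simp add: Mv diag_mult)
        ultimately show "norm ((F x - F x0) $ i) \<le> norm ((M *v v) $ i)"
          using key[OF dx(1), of i] by (simp add: abs_mult)
      qed
      also have "\<dots> \<le> onorm ((*v) M) * norm v" using onorm[OF blM] by simp
      finally have "norm (F x - F x0) / norm v \<le> onorm ((*v) M)"
        using vpos by (simp add: divide_le_eq)
      then show ?thesis by (simp add: v_def)
    qed
    then have "(SUP x\<in>X - {x0}. ereal (norm (F x - F x0) / norm (x - x0))) \<le> ereal (onorm ((*v) M))"
      by (rule SUP_least)
    then show "(if X - {x0} = {} then 0 else SUP x\<in>X - {x0}. ereal (norm (F x - F x0) / norm (x - x0)))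
        \<le> ereal (onorm ((*v) M))" using False by simp
  qed
qed

end
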